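(* Let $\mathbb{F}$ be an algebraically closed field of characteristic different from $2$ and let $\mathcal{H}_3(\mathcal{O}(\mathbb{F}))$ be the Jordan algebra of self-adjoint $3\times3$ matrices over the octonion algebra $\mathcal{O}(\mathbb{F})$. Then every 2-local inner derivation on $\mathcal{H}_3(\mathcal{O}(\mathbb{F}))$ is a derivation.
   Context: $\mathcal{Q}(\mathbb{F})$ is a quaternion algebra: associative unital with basis $\mathbf{1},i,j,k$, $i^2=\lambda\mathbf{1}$, $j^2=\mu\mathbf{1}$, $ij=-ji=k$ ($\lambda,\mu\neq0$), involution $a\mapsto\bar a$ negating the $i,j,k$ coordinates. $\mathcal{O}(\mathbb{F})=\mathcal{Q}(\mathbb{F})\oplus\mathcal{Q}(\mathbb{F})$ with product $(a,b)(c,d)=(ac+\nu\bar d b,\ da+b\bar c)$ for a fixed nonzero $\nu\in\mathbb{F}$, and involution $\overline{(a,b)}=(\bar a,-b)$ (the octonion/Cayley algebra; over an algebraically closed field it is the split octonions). $\mathcal{H}_3(\mathcal{O}(\mathbb{F}))$ is the 27-dimensional space of $3\times3$ matrices $x$ over $\mathcal{O}(\mathbb{F})$ with $x_{ij}=\overline{x_{ji}}$, with Jordan product $x\circ y=\frac12(xy+yx)$. A derivation is a linear map $D$ with $D(x\circ y)=D(x)\circ y+x\circ D(y)$; an inner derivation is a map $x\mapsto\sum_{k=1}^m(a_k\circ(b_k\circ x)-b_k\circ(a_k\circ x))$; a 2-local inner derivation is a map $\Delta$ (not assumed linear) such that for all $x,y$ there is an inner derivation $D$ with $\Delta(x)=D(x)$,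 $\Delta(y)=D(y)$. *)

theory Defs
  imports "HOL-Library.Product_Plus" "HOL-Library.Function_Algebras"
          "HOL-Library.Numeral_Type" "HOL-Computational_Algebra.Polynomial"
begin

text \<open>Coordinates (a0,a1,a2,a3) w.r.t. the basis 1,i,j,k, with
  i^2 = lam, j^2 = mu, ij = -ji = k (hence k^2 = -lam mu, ik = lam j, ki = -lam j,
  jk = -mu i, kj = mu i).\<close>

type_synonym 'a quat = "'a \<times> 'a \<times> 'a \<times> 'a"

fun qmul :: "'a::field \<Rightarrow> 'a \<Rightarrow> 'a quat \<Rightarrow> 'a quat \<Rightarrow> 'a quat" where
  "qmul lam mu (a0, a1, a2, a3) (b0, b1, b2, b3) =
    (a0*b0 + lam*a1*b1 + mu*a2*b2 - lam*mu*a3*b3,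
     a0*b1 + a1*b0 - mu*a2*b3 + mu*a3*b2,
     a0*b2 + a2*b0 + lam*a1*b3 - lam*a3*b1,
     a0*b3 + a3*b0 + a1*b2 - a2*b1)"

fun qconj :: "'a::field quat \<Rightarrow> 'a quat" where
  "qconj (a0, a1, a2, a3) = (a0, - a1, - a2, - a3)"

fun qscale :: "'a::field \<Rightarrow> 'a quat \<Rightarrow> 'a quat" where
  "qscale c (a0, a1, a2, a3) = (c*a0, c*a1, c*a2, c*a3)"

type_synonym 'a oct = "'a quat \<times> 'a quat"

fun omul :: "'a::field \<Rightarrow> 'a \<Rightarrow> 'a \<Rightarrow> 'a oct \<Rightarrow> 'a oct \<Rightarrow> 'a oct" where
  "omul lam mu nu (a, b) (c, d) =
    (qmul lam mu a c + qscale nu (qmul lam mu (qconj d) b),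
     qmul lam mu d a + qmul lam mu b (qconj c))"

fun oconj :: "'a::field oct \<Rightarrow> 'a oct" where
  "oconj (a, b) = (qconj a, - b)"

fun oscale :: "'a::field \<Rightarrow> 'a oct \<Rightarrow> 'a oct" where
  "oscale c (a, b) = (qscale c a, qscale c b)"

type_synonym 'a mat3 = "3 \<Rightarrow> 3 \<Rightarrow> 'a oct"

definition H3 :: "'a::field mat3 set" where
  "H3 = {x. \<forall>i j. x i j = oconj (x j i)}"

definition mmul :: "'a::field \<Rightarrow> 'a \<Rightarrow> 'a \<Rightarrow> 'a mat3 \<Rightarrow> 'a mat3 \<Rightarrow> 'a mat3" where
  "mmul lam mu nu x y = (\<lambda>i j. \<Sum>k\<in>UNIV. omul lam mu nu (x i k) (y k j))"

definition mscale :: "'a::field \<Rightarrow> 'a mat3 \<Rightarrow> 'a mat3" where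
  "mscale c x = (\<lambda>i j. oscale c (x i j))"

definition jprod :: "'a::field \<Rightarrow> 'a \<Rightarrow> 'a \<Rightarrow> 'a mat3 \<Rightarrow> 'a mat3 \<Rightarrow> 'a mat3" where
  "jprod lam mu nu x y = mscale (1/2) (mmul lam mu nu x y + mmul lam mu nu y x)"

definition is_derivation :: "'a::field \<Rightarrow> 'a \<Rightarrow> 'a \<Rightarrow> ('a mat3 \<Rightarrow> 'a mat3) \<Rightarrow> bool" where
  "is_derivation lam mu nu D \<longleftrightarrow>
     (\<forall>x\<in>H3. D x \<in> H3) \<and>
     (\<forall>x\<in>H3. \<forall>y\<in>H3. D (x + y) = D x + D y) \<and>
     (\<forall>c. \<forall>x\<in>H3. D (mscale c x) = mscale c (D x)) \<and>
     (\<forall>x\<in>H3. \<forall>y\<in>H3. D (jprod lam mu nu x y) =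
        jprod lam mu nu (D x) y + jprod lam mu nu x (D y))"

definition is_inner_derivation :: "'a::field \<Rightarrow> 'a \<Rightarrow> 'a \<Rightarrow> ('a mat3 \<Rightarrow> 'a mat3) \<Rightarrow> bool" where
  "is_inner_derivation lam mu nu D \<longleftrightarrow>
     (\<exists>(m::nat) (a::nat \<Rightarrow> 'a mat3) (b::nat \<Rightarrow> 'a mat3).
        (\<forall>k<m. a k \<in> H3 \<and> b k \<in> H3) \<and>
        (\<forall>x\<in>H3. D x = (\<Sum>k<m. jprod lam mu nu (a k) (jprod lam mu nu (b k) x)
                               - jprod lam mu nu (b k) (jprod lam mu nu (a k) x))))"

definition is_2local_inner_derivation ::
  "'a::field \<Rightarrow> 'a \<Rightarrow> 'a \<Rightarrow> ('a mat3 \<Rightarrow> 'a mat3) \<Rightarrow> bool" where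
  "is_2local_inner_derivation lam mu nu \<Delta> \<longleftrightarrow>
     (\<forall>x\<in>H3. \<forall>y\<in>H3. \<exists>D. is_inner_derivation lam mu nu D \<and> \<Delta> x = D x \<and> \<Delta> y = D y)"

definition algebraically_closed :: "'a::field itself \<Rightarrow> bool" where
  "algebraically_closed _ \<longleftrightarrow> (\<forall>p::'a poly. degree p > 0 \<longrightarrow> (\<exists>z. poly p z = 0))"

end

theory Submission
  imports Defs
begin


lemma three_cases: "(i::3) = 0 \<or> i = 1 \<or> i = 2"
proof (induct i)
  case (of_int z)
  then have "z = 0 \<or> z = 1 \<or> z = 2" by fastforce
  then show ?case by auto
qed

lemma three_ne: "(0::3) \<noteq> 1" "(1::3) \<noteq> 0" "(0::3) \<noteq> 2" "(2::3) \<noteq> 0" "(1::3) \<noteq> 2" "(2::3) \<noteq> 1"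
  by simp_all

lemma UNIV3: "(UNIV::3 set) = {0,1,2}" using three_cases by auto

lemma sum3: "(\<Sum>k\<in>(UNIV::3 set). f k) = f 0 + f 1 + f 2"
  unfolding UNIV3 by (simp add: ac_simps)

lemma mat_eqI:
  fixes x y :: "3 \<Rightarrow> 3 \<Rightarrow> 'c"
  assumes "x 0 0 = y 0 0" "x 0 1 = y 0 1" "x 0 2 = y 0 2" "x 1 0 = y 1 0" "x 1 1 = y 1 1" "x 1 2 = y 1 2"
     "x 2 0 = y 2 0" "x 2 1 = y 2 1" "x 2 2 = y 2 2"
  shows "x = y"
proof (intro ext)
  fix i j :: 3
  show "x i j = y i j" using three_cases[of i] three_cases[of j] assms by auto
qed

section \<open>Coordinates of H3\<close>

type_synonym 'a hc = "'a \<times> 'a \<times> 'a \<times> 'a oct \<times> 'a oct \<times> 'a oct"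

definition re :: "'a::field oct \<Rightarrow> 'a" where "re u = fst (fst u)"

fun HP :: "'a::field \<Rightarrow> 'a \<Rightarrow> 'a \<Rightarrow> 'a hc \<Rightarrow> 'a hc \<Rightarrow> 'a hc" where
 "HP lam mu nu (d0,d1,d2,c0,c1,c2) (e0,e1,e2,f0,f1,f2) = (
   2*d0*e0 + re (omul lam mu nu c2 (oconj f2)) + re (omul lam mu nu (oconj c1) f1) + re (omul lam mu nu f2 (oconj c2)) + re (omul lam mu nu (oconj f1) c1),
   2*d1*e1 + re (omul lam mu nu (oconj c2) f2) + re (omul lam mu nu c0 (oconj f0)) + re (omul lam mu nu (oconj f2) c2) + re (omul lam mu nu f0 (oconj c0)),
   2*d2*e2 + re (omul lam mu nu c1 (oconj f1)) + re (omul lam mu nu (oconj c0) f0) + re (omul lam mu nu f1 (oconj c1)) + re (omul lam mu nu (oconj f0) c0),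
   omul lam mu nu (oconj c2) (oconj f1) + oscale d1 f0 + oscale e2 c0 + omul lam mu nu (oconj f2) (oconj c1) + oscale e1 c0 + oscale d2 f0,
   oscale e0 c1 + omul lam mu nu (oconj c0) (oconj f2) + oscale d2 f1 + oscale d0 f1 + omul lam mu nu (oconj f0) (oconj c2) + oscale e2 c1,
   oscale d0 f2 + oscale e1 c2 + omul lam mu nu (oconj c1) (oconj f0) + oscale e0 c2 + oscale d1 f2 + omul lam mu nu (oconj f1) (oconj c0))"

definition nrm :: "'a::field \<Rightarrow> 'a \<Rightarrow> 'a \<Rightarrow> 'a oct \<Rightarrow> 'a" where
  "nrm lam mu nu c = re (omul lam mu nu c (oconj c))"

fun sharp :: "'a::field \<Rightarrow> 'a \<Rightarrow> 'a \<Rightarrow> 'a hc \<Rightarrow> 'a hc" where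
 "sharp lam mu nu (d0,d1,d2,c0,c1,c2) = (d1*d2 - nrm lam mu nu c0, d2*d0 - nrm lam mu nu c1, d0*d1 - nrm lam mu nu c2,
    oconj (omul lam mu nu c1 c2) - oscale d0 c0, oconj (omul lam mu nu c2 c0) - oscale d1 c1,
    oconj (omul lam mu nu c0 c1) - oscale d2 c2)"

fun tr :: "'a::field hc \<Rightarrow> 'a" where "tr (d0,d1,d2,c0,c1,c2) = d0 + d1 + d2"

fun hscale :: "'a::field \<Rightarrow> 'a hc \<Rightarrow> 'a hc" where
  "hscale c (d0,d1,d2,c0,c1,c2) = (c*d0, c*d1, c*d2, oscale c c0, oscale c c1, oscale c c2)"

definition hone :: "'a::field hc" where
  "hone = (1,1,1,((0,0,0,0),(0,0,0,0)),((0,0,0,0),(0,0,0,0)),((0,0,0,0),(0,0,0,0)))"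

definition Tp :: "'a::field \<Rightarrow> 'a \<Rightarrow> 'a \<Rightarrow> 'a hc \<Rightarrow> 'a hc \<Rightarrow> 'a" where
  "Tp lam mu nu p q = tr (HP lam mu nu p q)"

definition cross :: "'a::field \<Rightarrow> 'a \<Rightarrow> 'a \<Rightarrow> 'a hc \<Rightarrow> 'a hc \<Rightarrow> 'a hc" where
  "cross lam mu nu p q = sharp lam mu nu (p + q) - sharp lam mu nu p - sharp lam mu nu q"

lemmas evs = HP.simps sharp.simps tr.simps hscale.simps hone_def Tp_def cross_def nrm_def re_def
  oscale.simps qscale.simps omul.simps qmul.simps qconj.simps oconj.simps add_Pair diff_Pair uminus_Pair
  fst_conv snd_conv prod.inject zero_prod_def simp_thms mult_zero_left mult_zero_right
  add_0_left add_0_right diff_zero diff_0 minus_zero minus_minus mult_1_left mult_1_right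

lemma hc_cases:
  obtains d0 d1 d2 a0 a1 a2 a3 a4 a5 a6 a7 b0 b1 b2 b3 b4 b5 b6 b7 c0 c1 c2 c3 c4 c5 c6 c7
  where "p = (d0,d1,d2,((a0,a1,a2,a3),(a4,a5,a6,a7)),((b0,b1,b2,b3),(b4,b5,b6,b7)),((c0,c1,c2,c3),(c4,c5,c6,c7)))"
  using that[of "fst p" "fst (snd p)" "fst (snd (snd p))" "fst (fst (fst (snd (snd (snd p)))))" "fst (snd (fst (fst (snd (snd (snd p))))))" "fst (snd (snd (fst (fst (snd (snd (snd p)))))))" "snd (snd (snd (fst (fst (snd (snd (snd p)))))))" "fst (snd (fst (snd (snd (snd p)))))" "fst (snd (snd (fst (snd (snd (snd p))))))" "fst (snd (snd (snd (fst (snd (snd (snd p)))))))" "snd (snd (snd (snd (fst (snd (snd (snd p)))))))" "fst (fst (fst (snd (snd (snd (snd p))))))" "fst (snd (fst (fst (snd (snd (snd (snd p)))))))" "fst (snd (snd (fst (fst (snd (snd (snd (snd p))))))))" "snd (snd (snd (fst (fst (snd (snd (snd (snd p))))))))" "fst (snd (fst (snd (snd (snd (snd p))))))" "fst (snd (snd (fst (snd (snd (snd (snd p)))))))" "fst (snd (snd (snd (fst (snd (snd (snd (snd p))))))))" "snd (snd (snd (snd (fst (snd (snd (snd (snd p))))))))" "fst (fst (snd (snd (snd (snd (snd p))))))" "fst (snd (fst (snd (snd (snd (snd (snd p)))))))" "fst (snd (snd (fst (snd (snd (snd (snd (snd p))))))))" "snd (snd (snd (fst (snd (snd (snd (snd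 (snd p))))))))" "fst (snd (snd (snd (snd (snd (snd p))))))" "fst (snd (snd (snd (snd (snd (snd (snd p)))))))" "fst (snd (snd (snd (snd (snd (snd (snd (snd p))))))))" "snd (snd (snd (snd (snd (snd (snd (snd (snd p))))))))"] by simp

lemma hc_induct:
  assumes h: "\<And>d0 d1 d2 a0 a1 a2 a3 a4 a5 a6 a7 b0 b1 b2 b3 b4 b5 b6 b7 c0 c1 c2 c3 c4 c5 c6 c7.
     P (d0,d1,d2,((a0,a1,a2,a3),(a4,a5,a6,a7)),((b0,b1,b2,b3),(b4,b5,b6,b7)),((c0,c1,c2,c3),(c4,c5,c6,c7)))"
  shows "P p"
  using h[of "fst p" "fst (snd p)" "fst (snd (snd p))" "fst (fst (fst (snd (snd (snd p)))))" "fst (snd (fst (fst (snd (snd (snd p))))))" "fst (snd (snd (fst (fst (snd (snd (snd p)))))))" "snd (snd (snd (fst (fst (snd (snd (snd p)))))))" "fst (snd (fst (snd (snd (snd p)))))" "fst (snd (snd (fst (snd (snd (snd p))))))" "fst (snd (snd (snd (fst (snd (snd (snd p)))))))" "snd (snd (snd (snd (fst (snd (snd (snd p)))))))" "fst (fst (fst (snd (snd (snd (snd p))))))" "fst (snd (fst (fst (snd (snd (snd (snd p)))))))" "fst (snd (snd (fst (fst (snd (snd (snd (snd p))))))))" "snd (snd (snd (fst (fst (snd (snd (snd (snd p))))))))" "fst (snd (fst (snd (snd (snd (snd p))))))" "fst (snd (snd (fst (snd (snd (snd (snd p)))))))" "fst (snd (snd (snd (fst (snd (snd (snd (snd p))))))))"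 "snd (snd (snd (snd (fst (snd (snd (snd (snd p))))))))" "fst (fst (snd (snd (snd (snd (snd p))))))" "fst (snd (fst (snd (snd (snd (snd (snd p)))))))" "fst (snd (snd (fst (snd (snd (snd (snd (snd p))))))))" "snd (snd (snd (fst (snd (snd (snd (snd (snd p))))))))" "fst (snd (snd (snd (snd (snd (snd p))))))" "fst (snd (snd (snd (snd (snd (snd (snd p)))))))" "fst (snd (snd (snd (snd (snd (snd (snd (snd p))))))))" "snd (snd (snd (snd (snd (snd (snd (snd (snd p))))))))"] by simp
lemma HP_comm: "HP lam mu nu p q = HP lam mu nu q p"
  by (induct p rule: hc_induct; induct q rule: hc_induct; simp only: evs; (intro conjI)?; algebra)

lemma HP_add1: "HP lam mu nu (p + q) r = HP lam mu nu p r + HP lam mu nu q r"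
  by (induct p rule: hc_induct; induct q rule: hc_induct; induct r rule: hc_induct; simp only: evs; (intro conjI)?; algebra)

lemma HP_scale1: "HP lam mu nu (hscale c p) q = hscale c (HP lam mu nu p q)"
  by (induct p rule: hc_induct; induct q rule: hc_induct; simp only: evs; (intro conjI)?; algebra)

lemma Tp_assoc: "Tp lam mu nu (HP lam mu nu p q) r = Tp lam mu nu p (HP lam mu nu q r)"
  by (induct p rule: hc_induct; induct q rule: hc_induct; induct r rule: hc_induct; simp only: evs; (intro conjI)?; algebra)

lemma tr_add: "tr (p + q) = tr p + tr q"
  by (induct p rule: hc_induct; induct q rule: hc_induct; simp only: evs; (intro conjI)?; algebra)

lemma tr_scale: "tr (hscale c p) = c * tr p"
  by (induct p rule: hc_induct; simp only: evs; (intro conjI)?; algebra)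

lemma sharp_diff: "sharp lam mu nu (p - q) = sharp lam mu nu p - cross lam mu nu p q + sharp lam mu nu q"
  by (induct p rule: hc_induct; induct q rule: hc_induct; simp only: evs; (intro conjI)?; algebra)

lemma cross_sym3: "Tp lam mu nu (cross lam mu nu x y) z = Tp lam mu nu (cross lam mu nu x z) y"
  by (induct x rule: hc_induct; induct y rule: hc_induct; induct z rule: hc_induct; simp only: evs; (intro conjI)?; algebra)

lemma cross_one: "cross lam mu nu x hone = hscale (tr x) hone - x"
  by (induct x rule: hc_induct; simp only: evs; (intro conjI)?; algebra)

lemma HP_sq: "HP lam mu nu x x = hscale 2 (sharp lam mu nu x) + hscale (2 * tr x) x - hscale (2 * tr (sharp lam mu nu x)) hone"
  by (induct x rule: hc_induct; simp only: evs; (intro conjI)?; algebra)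

lemma HP_cross: "HP lam mu nu x y = cross lam mu nu x y + hscale (tr x) y + hscale (tr y) x - hscale (tr (cross lam mu nu x y)) hone"
  by (induct x rule: hc_induct; induct y rule: hc_induct; simp only: evs; (intro conjI)?; algebra)

lemma HP_one: "HP lam mu nu b hone = b + b"
  by (induct b rule: hc_induct; simp only: evs; (intro conjI)?; algebra)

lemma Tp_one: "Tp lam mu nu x hone = 2 * tr x"
  by (induct x rule: hc_induct; simp only: evs; (intro conjI)?; algebra)

lemma hscale_add: "hscale c (p + q) = hscale c p + hscale c q"
  by (induct p rule: hc_induct; induct q rule: hc_induct; simp only: evs; (intro conjI)?; algebra)

lemma hscale_diff: "hscale c (p - q) = hscale c p - hscale c q"
  by (induct p rule: hc_induct; induct q rule: hc_induct; simp only: evs; (intro conjI)?; algebra)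

lemma hscale_mult: "hscale c (hscale d p) = hscale (c * d) p"
  by (induct p rule: hc_induct; simp only: evs; (intro conjI)?; algebra)

lemma hscale_one: "hscale 1 p = p"
  by (induct p rule: hc_induct; simp only: evs; (intro conjI)?; algebra)

lemma hscale_zero: "hscale 0 p = 0"
  by (induct p rule: hc_induct; simp only: evs; (intro conjI)?; algebra)

lemma hscale_two: "hscale 2 p = p + p"
  by (induct p rule: hc_induct; simp only: evs; (intro conjI)?; algebra)

lemma hscale_distrib: "hscale (c + d) p = hscale c p + hscale d p"
  by (induct p rule: hc_induct; simp only: evs; (intro conjI)?; algebra)



lemma oct_induct:
  assumes h: "\<And>a0 a1 a2 a3 a4 a5 a6 a7. P ((a0,a1,a2,a3),(a4,a5,a6,a7))"
  shows "P c"
  using h[of "fst (fst c)" "fst (snd (fst c))" "fst (snd (snd (fst c)))" "snd (snd (snd (fst c)))"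
    "fst (snd c)" "fst (snd (snd c))" "fst (snd (snd (snd c)))" "snd (snd (snd (snd c)))"] by simp

lemma hscale_zero2: "hscale c (0::'a::field hc) = 0"
  by (simp only: zero_prod_def evs)

lemma V_d: "HP lam mu nu (sharp lam mu nu x) (HP lam mu nu x (e0,e1,e2,0,0,0)) = HP lam mu nu x (HP lam mu nu (sharp lam mu nu x) (e0,e1,e2,0,0,0))"
  by (induct x rule: hc_induct; simp only: evs; (intro conjI)?; algebra)

lemma V_0: "HP lam mu nu (sharp lam mu nu x) (HP lam mu nu x (0,0,0,c,0,0)) = HP lam mu nu x (HP lam mu nu (sharp lam mu nu x) (0,0,0,c,0,0))"
  by (induct x rule: hc_induct; induct c rule: oct_induct; simp only: evs; (intro conjI)?; algebra)

lemma V_1: "HP lam mu nu (sharp lam mu nu x) (HP lam mu nu x (0,0,0,0,c,0)) = HP lam mu nu x (HP lam mu nu (sharp lam mu nu x) (0,0,0,0,c,0))"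
  by (induct x rule: hc_induct; induct c rule: oct_induct; simp only: evs; (intro conjI)?; algebra)

lemma V_2: "HP lam mu nu (sharp lam mu nu x) (HP lam mu nu x (0,0,0,0,0,c)) = HP lam mu nu x (HP lam mu nu (sharp lam mu nu x) (0,0,0,0,0,c))"
  by (induct x rule: hc_induct; induct c rule: oct_induct; simp only: evs; (intro conjI)?; algebra)


lemma V: "HP lam mu nu (sharp lam mu nu x) (HP lam mu nu x b) = HP lam mu nu x (HP lam mu nu (sharp lam mu nu x) b)"
proof -
  obtain e0 e1 e2 c0 c1 c2 where b: "b = (e0,e1,e2,c0,c1,c2)"
    using that[of "fst b" "fst (snd b)" "fst (snd (snd b))" "fst (snd (snd (snd b)))" "fst (snd (snd (snd (snd b))))" "snd (snd (snd (snd (snd b))))"] by simp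
  have bs: "b = (e0,e1,e2,0,0,0) + (0,0,0,c0,0,0) + (0,0,0,0,c1,0) + (0,0,0,0,0,c2)" by (simp add: b)
  have add2: "HP lam mu nu p (q + r) = HP lam mu nu p q + HP lam mu nu p r" for p q r
    by (metis HP_comm HP_add1)
  show ?thesis by (simp only: bs add2 V_d V_0 V_1 V_2)
qed




lemma Tp_nondeg:
  fixes lam mu nu :: "'a::field"
  assumes l: "lam \<noteq> 0" and m: "mu \<noteq> 0" and n: "nu \<noteq> 0" and two: "(2::'a) \<noteq> 0"
    and h: "\<And>z. Tp lam mu nu w z = 0"
  shows "w = 0"
proof -
  have four: "(4::'a) \<noteq> 0" using two by (metis mult_eq_0_iff num_double numeral_times_numeral)
  obtain d0 d1 d2 a0 a1 a2 a3 a4 a5 a6 a7 b0 b1 b2 b3 b4 b5 b6 b7 c0 c1 c2 c3 c4 c5 c6 c7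
    where w: "w = (d0,d1,d2,((a0,a1,a2,a3),(a4,a5,a6,a7)),((b0,b1,b2,b3),(b4,b5,b6,b7)),((c0,c1,c2,c3),(c4,c5,c6,c7)))" by (rule hc_cases)
  have e0: "Tp lam mu nu w (1,0,0,((0,0,0,0),(0,0,0,0)),((0,0,0,0),(0,0,0,0)),((0,0,0,0),(0,0,0,0))) = (2::'a) * d0"
    unfolding w by (simp only: evs; algebra)
  have z0: "d0 = 0" using h[of "(1,0,0,((0,0,0,0),(0,0,0,0)),((0,0,0,0),(0,0,0,0)),((0,0,0,0),(0,0,0,0)))"] e0 l m n two four by simp
  have e1: "Tp lam mu nu w (0,1,0,((0,0,0,0),(0,0,0,0)),((0,0,0,0),(0,0,0,0)),((0,0,0,0),(0,0,0,0))) = (2::'a) * d1"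
    unfolding w by (simp only: evs; algebra)
  have z1: "d1 = 0" using h[of "(0,1,0,((0,0,0,0),(0,0,0,0)),((0,0,0,0),(0,0,0,0)),((0,0,0,0),(0,0,0,0)))"] e1 l m n two four by simp
  have e2: "Tp lam mu nu w (0,0,1,((0,0,0,0),(0,0,0,0)),((0,0,0,0),(0,0,0,0)),((0,0,0,0),(0,0,0,0))) = (2::'a) * d2"
    unfolding w by (simp only: evs; algebra)
  have z2: "d2 = 0" using h[of "(0,0,1,((0,0,0,0),(0,0,0,0)),((0,0,0,0),(0,0,0,0)),((0,0,0,0),(0,0,0,0)))"] e2 l m n two four by simp
  have e3: "Tp lam mu nu w (0,0,0,((1,0,0,0),(0,0,0,0)),((0,0,0,0),(0,0,0,0)),((0,0,0,0),(0,0,0,0))) = (4::'a) * a0"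
    unfolding w by (simp only: evs; algebra)
  have z3: "a0 = 0" using h[of "(0,0,0,((1,0,0,0),(0,0,0,0)),((0,0,0,0),(0,0,0,0)),((0,0,0,0),(0,0,0,0)))"] e3 l m n two four by simp
  have e4: "Tp lam mu nu w (0,0,0,((0,1,0,0),(0,0,0,0)),((0,0,0,0),(0,0,0,0)),((0,0,0,0),(0,0,0,0))) = - ((4::'a) * lam * a1)"
    unfolding w by (simp only: evs; algebra)
  have z4: "a1 = 0" using h[of "(0,0,0,((0,1,0,0),(0,0,0,0)),((0,0,0,0),(0,0,0,0)),((0,0,0,0),(0,0,0,0)))"] e4 l m n two four by simp
  have e5: "Tp lam mu nu w (0,0,0,((0,0,1,0),(0,0,0,0)),((0,0,0,0),(0,0,0,0)),((0,0,0,0),(0,0,0,0))) = - ((4::'a) * mu * a2)"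
    unfolding w by (simp only: evs; algebra)
  have z5: "a2 = 0" using h[of "(0,0,0,((0,0,1,0),(0,0,0,0)),((0,0,0,0),(0,0,0,0)),((0,0,0,0),(0,0,0,0)))"] e5 l m n two four by simp
  have e6: "Tp lam mu nu w (0,0,0,((0,0,0,1),(0,0,0,0)),((0,0,0,0),(0,0,0,0)),((0,0,0,0),(0,0,0,0))) = (4::'a) * lam * mu * a3"
    unfolding w by (simp only: evs; algebra)
  have z6: "a3 = 0" using h[of "(0,0,0,((0,0,0,1),(0,0,0,0)),((0,0,0,0),(0,0,0,0)),((0,0,0,0),(0,0,0,0)))"] e6 l m n two four by simp
  have e7: "Tp lam mu nu w (0,0,0,((0,0,0,0),(1,0,0,0)),((0,0,0,0),(0,0,0,0)),((0,0,0,0),(0,0,0,0))) = - ((4::'a) * nu * a4)"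
    unfolding w by (simp only: evs; algebra)
  have z7: "a4 = 0" using h[of "(0,0,0,((0,0,0,0),(1,0,0,0)),((0,0,0,0),(0,0,0,0)),((0,0,0,0),(0,0,0,0)))"] e7 l m n two four by simp
  have e8: "Tp lam mu nu w (0,0,0,((0,0,0,0),(0,1,0,0)),((0,0,0,0),(0,0,0,0)),((0,0,0,0),(0,0,0,0))) = (4::'a) * lam * nu * a5"
    unfolding w by (simp only: evs; algebra)
  have z8: "a5 = 0" using h[of "(0,0,0,((0,0,0,0),(0,1,0,0)),((0,0,0,0),(0,0,0,0)),((0,0,0,0),(0,0,0,0)))"] e8 l m n two four by simp
  have e9: "Tp lam mu nu w (0,0,0,((0,0,0,0),(0,0,1,0)),((0,0,0,0),(0,0,0,0)),((0,0,0,0),(0,0,0,0))) = (4::'a) * mu * nu * a6"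
    unfolding w by (simp only: evs; algebra)
  have z9: "a6 = 0" using h[of "(0,0,0,((0,0,0,0),(0,0,1,0)),((0,0,0,0),(0,0,0,0)),((0,0,0,0),(0,0,0,0)))"] e9 l m n two four by simp
  have e10: "Tp lam mu nu w (0,0,0,((0,0,0,0),(0,0,0,1)),((0,0,0,0),(0,0,0,0)),((0,0,0,0),(0,0,0,0))) = - ((4::'a) * lam * mu * nu * a7)"
    unfolding w by (simp only: evs; algebra)
  have z10: "a7 = 0" using h[of "(0,0,0,((0,0,0,0),(0,0,0,1)),((0,0,0,0),(0,0,0,0)),((0,0,0,0),(0,0,0,0)))"] e10 l m n two four by simp
  have e11: "Tp lam mu nu w (0,0,0,((0,0,0,0),(0,0,0,0)),((1,0,0,0),(0,0,0,0)),((0,0,0,0),(0,0,0,0))) = (4::'a) * b0"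
    unfolding w by (simp only: evs; algebra)
  have z11: "b0 = 0" using h[of "(0,0,0,((0,0,0,0),(0,0,0,0)),((1,0,0,0),(0,0,0,0)),((0,0,0,0),(0,0,0,0)))"] e11 l m n two four by simp
  have e12: "Tp lam mu nu w (0,0,0,((0,0,0,0),(0,0,0,0)),((0,1,0,0),(0,0,0,0)),((0,0,0,0),(0,0,0,0))) = - ((4::'a) * lam * b1)"
    unfolding w by (simp only: evs; algebra)
  have z12: "b1 = 0" using h[of "(0,0,0,((0,0,0,0),(0,0,0,0)),((0,1,0,0),(0,0,0,0)),((0,0,0,0),(0,0,0,0)))"] e12 l m n two four by simp
  have e13: "Tp lam mu nu w (0,0,0,((0,0,0,0),(0,0,0,0)),((0,0,1,0),(0,0,0,0)),((0,0,0,0),(0,0,0,0))) = - ((4::'a) * mu * b2)"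
    unfolding w by (simp only: evs; algebra)
  have z13: "b2 = 0" using h[of "(0,0,0,((0,0,0,0),(0,0,0,0)),((0,0,1,0),(0,0,0,0)),((0,0,0,0),(0,0,0,0)))"] e13 l m n two four by simp
  have e14: "Tp lam mu nu w (0,0,0,((0,0,0,0),(0,0,0,0)),((0,0,0,1),(0,0,0,0)),((0,0,0,0),(0,0,0,0))) = (4::'a) * lam * mu * b3"
    unfolding w by (simp only: evs; algebra)
  have z14: "b3 = 0" using h[of "(0,0,0,((0,0,0,0),(0,0,0,0)),((0,0,0,1),(0,0,0,0)),((0,0,0,0),(0,0,0,0)))"] e14 l m n two four by simp
  have e15: "Tp lam mu nu w (0,0,0,((0,0,0,0),(0,0,0,0)),((0,0,0,0),(1,0,0,0)),((0,0,0,0),(0,0,0,0))) = - ((4::'a) * nu * b4)"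
    unfolding w by (simp only: evs; algebra)
  have z15: "b4 = 0" using h[of "(0,0,0,((0,0,0,0),(0,0,0,0)),((0,0,0,0),(1,0,0,0)),((0,0,0,0),(0,0,0,0)))"] e15 l m n two four by simp
  have e16: "Tp lam mu nu w (0,0,0,((0,0,0,0),(0,0,0,0)),((0,0,0,0),(0,1,0,0)),((0,0,0,0),(0,0,0,0))) = (4::'a) * lam * nu * b5"
    unfolding w by (simp only: evs; algebra)
  have z16: "b5 = 0" using h[of "(0,0,0,((0,0,0,0),(0,0,0,0)),((0,0,0,0),(0,1,0,0)),((0,0,0,0),(0,0,0,0)))"] e16 l m n two four by simp
  have e17: "Tp lam mu nu w (0,0,0,((0,0,0,0),(0,0,0,0)),((0,0,0,0),(0,0,1,0)),((0,0,0,0),(0,0,0,0))) = (4::'a) * mu * nu * b6"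
    unfolding w by (simp only: evs; algebra)
  have z17: "b6 = 0" using h[of "(0,0,0,((0,0,0,0),(0,0,0,0)),((0,0,0,0),(0,0,1,0)),((0,0,0,0),(0,0,0,0)))"] e17 l m n two four by simp
  have e18: "Tp lam mu nu w (0,0,0,((0,0,0,0),(0,0,0,0)),((0,0,0,0),(0,0,0,1)),((0,0,0,0),(0,0,0,0))) = - ((4::'a) * lam * mu * nu * b7)"
    unfolding w by (simp only: evs; algebra)
  have z18: "b7 = 0" using h[of "(0,0,0,((0,0,0,0),(0,0,0,0)),((0,0,0,0),(0,0,0,1)),((0,0,0,0),(0,0,0,0)))"] e18 l m n two four by simp
  have e19: "Tp lam mu nu w (0,0,0,((0,0,0,0),(0,0,0,0)),((0,0,0,0),(0,0,0,0)),((1,0,0,0),(0,0,0,0))) = (4::'a) * c0"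
    unfolding w by (simp only: evs; algebra)
  have z19: "c0 = 0" using h[of "(0,0,0,((0,0,0,0),(0,0,0,0)),((0,0,0,0),(0,0,0,0)),((1,0,0,0),(0,0,0,0)))"] e19 l m n two four by simp
  have e20: "Tp lam mu nu w (0,0,0,((0,0,0,0),(0,0,0,0)),((0,0,0,0),(0,0,0,0)),((0,1,0,0),(0,0,0,0))) = - ((4::'a) * lam * c1)"
    unfolding w by (simp only: evs; algebra)
  have z20: "c1 = 0" using h[of "(0,0,0,((0,0,0,0),(0,0,0,0)),((0,0,0,0),(0,0,0,0)),((0,1,0,0),(0,0,0,0)))"] e20 l m n two four by simp
  have e21: "Tp lam mu nu w (0,0,0,((0,0,0,0),(0,0,0,0)),((0,0,0,0),(0,0,0,0)),((0,0,1,0),(0,0,0,0))) = - ((4::'a) * mu * c2)"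
    unfolding w by (simp only: evs; algebra)
  have z21: "c2 = 0" using h[of "(0,0,0,((0,0,0,0),(0,0,0,0)),((0,0,0,0),(0,0,0,0)),((0,0,1,0),(0,0,0,0)))"] e21 l m n two four by simp
  have e22: "Tp lam mu nu w (0,0,0,((0,0,0,0),(0,0,0,0)),((0,0,0,0),(0,0,0,0)),((0,0,0,1),(0,0,0,0))) = (4::'a) * lam * mu * c3"
    unfolding w by (simp only: evs; algebra)
  have z22: "c3 = 0" using h[of "(0,0,0,((0,0,0,0),(0,0,0,0)),((0,0,0,0),(0,0,0,0)),((0,0,0,1),(0,0,0,0)))"] e22 l m n two four by simp
  have e23: "Tp lam mu nu w (0,0,0,((0,0,0,0),(0,0,0,0)),((0,0,0,0),(0,0,0,0)),((0,0,0,0),(1,0,0,0))) = - ((4::'a) * nu * c4)"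
    unfolding w by (simp only: evs; algebra)
  have z23: "c4 = 0" using h[of "(0,0,0,((0,0,0,0),(0,0,0,0)),((0,0,0,0),(0,0,0,0)),((0,0,0,0),(1,0,0,0)))"] e23 l m n two four by simp
  have e24: "Tp lam mu nu w (0,0,0,((0,0,0,0),(0,0,0,0)),((0,0,0,0),(0,0,0,0)),((0,0,0,0),(0,1,0,0))) = (4::'a) * lam * nu * c5"
    unfolding w by (simp only: evs; algebra)
  have z24: "c5 = 0" using h[of "(0,0,0,((0,0,0,0),(0,0,0,0)),((0,0,0,0),(0,0,0,0)),((0,0,0,0),(0,1,0,0)))"] e24 l m n two four by simp
  have e25: "Tp lam mu nu w (0,0,0,((0,0,0,0),(0,0,0,0)),((0,0,0,0),(0,0,0,0)),((0,0,0,0),(0,0,1,0))) = (4::'a) * mu * nu * c6"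
    unfolding w by (simp only: evs; algebra)
  have z25: "c6 = 0" using h[of "(0,0,0,((0,0,0,0),(0,0,0,0)),((0,0,0,0),(0,0,0,0)),((0,0,0,0),(0,0,1,0)))"] e25 l m n two four by simp
  have e26: "Tp lam mu nu w (0,0,0,((0,0,0,0),(0,0,0,0)),((0,0,0,0),(0,0,0,0)),((0,0,0,0),(0,0,0,1))) = - ((4::'a) * lam * mu * nu * c7)"
    unfolding w by (simp only: evs; algebra)
  have z26: "c7 = 0" using h[of "(0,0,0,((0,0,0,0),(0,0,0,0)),((0,0,0,0),(0,0,0,0)),((0,0,0,0),(0,0,0,1)))"] e26 l m n two four by simp
  show ?thesis unfolding w by (simp add: zero_prod_def z0 z1 z2 z3 z4 z5 z6 z7 z8 z9 z10 z11 z12 z13 z14 z15 z16 z17 z18 z19 z20 z21 z22 z23 z24 z25 z26)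
qed

context
  fixes lam mu nu :: "'a::field"
begin

abbreviation "JP \<equiv> HP lam mu nu"
abbreviation "TT \<equiv> Tp lam mu nu"
abbreviation "SH \<equiv> sharp lam mu nu"
abbreviation "CR \<equiv> cross lam mu nu"

lemma HP_add2: "JP p (q + r) = JP p q + JP p r"
  by (metis HP_comm HP_add1)

lemma HP_scale2: "JP p (hscale c q) = hscale c (JP p q)"
  by (metis HP_comm HP_scale1)

lemma HP_diff1: "JP (p - q) r = JP p r - JP q r"
  using HP_add1[of lam mu nu "p - q" q r] by (simp add: algebra_simps)

lemma HP_diff2: "JP r (p - q) = JP r p - JP r q"
  by (metis HP_comm HP_diff1)

lemma Tp_sym: "TT p q = TT q p"
  by (simp add: Tp_def HP_comm)

lemma Tp_add1: "TT (p + q) r = TT p r + TT q r"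
  by (simp add: Tp_def HP_add1 tr_add)

lemma Tp_add2: "TT r (p + q) = TT r p + TT r q"
  by (metis Tp_sym Tp_add1)

lemma Tp_diff1: "TT (p - q) r = TT p r - TT q r"
  using Tp_add1[of "p - q" q r] by (simp add: algebra_simps)

lemma Tp_diff2: "TT r (p - q) = TT r p - TT r q"
  by (metis Tp_sym Tp_diff1)

lemma Tp_scale1: "TT (hscale c p) r = c * TT p r"
  by (simp add: Tp_def HP_scale1 tr_scale)

lemma Tp_zero1: "TT 0 r = 0"
  using Tp_diff1[of 0 0 r] by simp

lemma Tp_zero2: "TT r 0 = 0"
  by (metis Tp_sym Tp_zero1)

lemma tr_diff: "tr (p - q) = tr p - tr q"
  using tr_add[of "p - q" q] by (simp add: algebra_simps)

lemma sharp_add: "SH (p + q) = SH p + CR p q + SH q"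
  by (simp add: cross_def)

definition Dp :: "'a hc \<Rightarrow> 'a hc \<Rightarrow> 'a hc \<Rightarrow> 'a hc" where
  "Dp a b p = JP a (JP b p) - JP b (JP a p)"

lemma Dp_add: "Dp a b (p + q) = Dp a b p + Dp a b q"
  by (simp add: Dp_def HP_add2 algebra_simps)

lemma Dp_diff: "Dp a b (p - q) = Dp a b p - Dp a b q"
  by (simp add: Dp_def HP_diff2 algebra_simps)

lemma Dp_scale: "Dp a b (hscale c p) = hscale c (Dp a b p)"
  by (simp add: Dp_def HP_scale2 hscale_diff)

lemma Tp_assoc': "TT p (JP q r) = TT (JP p q) r"
  by (simp add: Tp_assoc)

lemma Dp_skew: "TT (Dp a b p) q = - TT p (Dp a b q)"
proof -
  have 1: "TT (JP a (JP b p)) q = TT p (JP b (JP a q))" for a b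
    by (metis HP_comm Tp_assoc)
  show ?thesis
    by (simp add: Dp_def Tp_diff1 Tp_diff2 1)
qed

lemma Dp_one: "Dp a b hone = 0"
  by (simp add: Dp_def HP_one HP_add2 HP_comm[of lam mu nu a b])

lemma Dp_sharp_self: "TT (SH x) (Dp a b x) = 0"
proof -
  have A1: "TT (SH x) (JP a (JP b x)) = TT a (JP (SH x) (JP x b))"
    by (metis Tp_sym Tp_assoc HP_comm)
  have A2: "TT (SH x) (JP b (JP a x)) = TT a (JP x (JP (SH x) b))"
    by (metis Tp_sym Tp_assoc HP_comm)
  show ?thesis
    by (simp add: Dp_def Tp_diff2 A1 A2 V)
qed

lemma Dp_sharp_lin: "TT (SH x) (Dp a b y) + TT (CR x y) (Dp a b x) = 0"
  if two: "(2::'a) \<noteq> 0"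
proof -
  have e1: "TT (SH (x + y)) (Dp a b (x + y)) = 0" by (rule Dp_sharp_self)
  have e2: "TT (SH (x - y)) (Dp a b (x - y)) = 0" by (rule Dp_sharp_self)
  have e3: "TT (SH y) (Dp a b y) = 0" by (rule Dp_sharp_self)
  have e4: "TT (SH x) (Dp a b x) = 0" by (rule Dp_sharp_self)
  note e1' = e1[unfolded sharp_add Dp_add Tp_add1 Tp_add2]
  note e2' = e2[unfolded sharp_diff Dp_diff Tp_add1 Tp_add2 Tp_diff1 Tp_diff2]
  have "2 * (TT (SH x) (Dp a b y) + TT (CR x y) (Dp a b x)) = 0"
    using e1' e2' e3 e4 by algebra
  then show ?thesis using two by (metis mult_eq_0_iff)
qed

lemma Dp_sharp: "Dp a b (SH x) = CR x (Dp a b x)"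
  if "lam \<noteq> 0" "mu \<noteq> 0" "nu \<noteq> 0" "(2::'a) \<noteq> 0"
proof -
  have "Dp a b (SH x) - CR x (Dp a b x) = 0"
  proof (rule Tp_nondeg[OF that])
    fix z
    have "TT (Dp a b (SH x)) z = TT (CR x z) (Dp a b x)"
      using Dp_skew[of a b "SH x" z] Dp_sharp_lin[OF that(4), of x a b z] by algebra
    also have "\<dots> = TT (CR x (Dp a b x)) z" by (rule cross_sym3)
    finally show "TT (Dp a b (SH x) - CR x (Dp a b x)) z = 0" by (simp add: Tp_diff1)
  qed
  then show ?thesis by simp
qed

lemma tr_Dp: "tr (Dp a b x) = 0" if two: "(2::'a) \<noteq> 0"
proof -
  have "2 * tr (Dp a b x) = TT (Dp a b x) hone" by (simp add: Tp_one)
  also have "\<dots> = - TT x (Dp a b hone)" by (rule Dp_skew)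
  also have "\<dots> = 0" by (simp add: Dp_one Tp_zero2)
  finally show ?thesis using two by simp
qed

lemma Tp_Dp_self: "TT x (Dp a b x) = 0" if two: "(2::'a) \<noteq> 0"
proof -
  have "TT x (Dp a b x) = - TT x (Dp a b x)" by (metis Dp_skew Tp_sym)
  then have "2 * TT x (Dp a b x) = 0" by algebra
  then show ?thesis using two by simp
qed

lemma tr_cross_Dp: "tr (CR x (Dp a b x)) = 0" if two: "(2::'a) \<noteq> 0"
proof -
  have "2 * tr (CR x (Dp a b x)) = TT (CR x (Dp a b x)) hone" by (simp add: Tp_one)
  also have "\<dots> = TT (CR x hone) (Dp a b x)" by (rule cross_sym3)
  also have "\<dots> = tr x * TT hone (Dp a b x) - TT x (Dp a b x)"
    by (simp add: cross_one Tp_diff1 Tp_scale1)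
  also have "\<dots> = 0"
    using tr_Dp[OF two, of a b x] Tp_Dp_self[OF two, of x a b] Tp_one[of lam mu nu "Dp a b x"] Tp_sym[of hone "Dp a b x"]
    by simp
  finally show ?thesis using two by simp
qed

lemma Dp_sq: "Dp a b (JP x x) = JP x (Dp a b x) + JP x (Dp a b x)"
  if "lam \<noteq> 0" "mu \<noteq> 0" "nu \<noteq> 0" "(2::'a) \<noteq> 0"
proof -
  have L: "Dp a b (JP x x) = hscale 2 (CR x (Dp a b x)) + hscale (2 * tr x) (Dp a b x)"
    by (simp add: HP_sq Dp_add Dp_diff Dp_scale Dp_one hscale_zero2 Dp_sharp[OF that])
  have R: "JP x (Dp a b x) = CR x (Dp a b x) + hscale (tr x) (Dp a b x)"
    by (simp add: HP_cross[of lam mu nu x] tr_Dp[OF that(4)] tr_cross_Dp[OF that(4)] hscale_zero)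
  show ?thesis
    unfolding L R hscale_two mult_2 hscale_distrib by (simp only: add_ac)
qed

end


definition sc :: "'a::field \<Rightarrow> 'a oct" where "sc d = ((d,0,0,0),(0,0,0,0))"

fun hm :: "'a::field hc \<Rightarrow> 'a mat3" where
 "hm (d0,d1,d2,c0,c1,c2) = (\<lambda>i j. if i = 0 then (if j = 0 then sc d0 else if j = 1 then c2 else oconj c1)
    else if i = 1 then (if j = 0 then oconj c2 else if j = 1 then sc d1 else c0)
    else (if j = 0 then c1 else if j = 1 then oconj c0 else sc d2))"

definition crd :: "'a::field mat3 \<Rightarrow> 'a hc" where
  "crd x = (re (x 0 0), re (x 1 1), re (x 2 2), x 1 2, x 2 0, x 0 1)"

lemmas mevs = evs hm.simps sc_def three_ne if_True if_False mmul_def sum3 mscale_def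
  plus_fun_apply minus_apply uminus_apply zero_fun_apply crd_def

lemma hm_HP: "mmul lam mu nu (hm p) (hm q) + mmul lam mu nu (hm q) (hm p) = hm (HP lam mu nu p q)"
  by (induct p rule: hc_induct; induct q rule: hc_induct; rule mat_eqI; simp only: mevs; (intro conjI)?; algebra)

lemma hm_add: "hm (p + q) = hm p + hm q"
  by (induct p rule: hc_induct; induct q rule: hc_induct; rule mat_eqI; simp only: mevs; (intro conjI)?; algebra)

lemma hm_diff: "hm (p - q) = hm p - hm q"
  by (induct p rule: hc_induct; induct q rule: hc_induct; rule mat_eqI; simp only: mevs; (intro conjI)?; algebra)

lemma hm_zero: "hm (0::'a::field hc) = 0"
  by (rule mat_eqI; simp only: mevs zero_prod_def; (intro conjI)?; algebra)

lemma hm_scale: "hm (hscale c p) = mscale c (hm p)"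
  by (induct p rule: hc_induct; rule mat_eqI; simp only: mevs; (intro conjI)?; algebra)

lemma crd_hm: "crd (hm p) = p"
  by (induct p rule: hc_induct; simp only: mevs; (intro conjI)?; algebra)

lemma hm_inj: "hm p = hm q \<Longrightarrow> p = q"
  by (metis crd_hm)

lemma hm_H3: "hm p \<in> H3"
proof -
  have E: "(\<lambda>i j. oconj (hm p j i)) = hm p"
    by (induct p rule: hc_induct; rule mat_eqI; simp only: mevs; (intro conjI)?; algebra)
  show ?thesis unfolding H3_def mem_Collect_eq
  proof (intro allI)
    fix i j
    show "hm p i j = oconj (hm p j i)" using fun_cong[OF fun_cong[OF E, of i], of j] by (rule sym)
  qed
qed

lemma oct_cases:
  obtains a0 a1 a2 a3 a4 a5 a6 a7 where "c = ((a0,a1,a2,a3),(a4,a5,a6,a7))"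
  using that[of "fst (fst c)" "fst (snd (fst c))" "fst (snd (snd (fst c)))" "snd (snd (snd (fst c)))"
    "fst (snd c)" "fst (snd (snd c))" "fst (snd (snd (snd c)))" "snd (snd (snd (snd c)))"] by simp

lemma self_neg: "(a::'a::field) = - a \<Longrightarrow> (2::'a) \<noteq> 0 \<Longrightarrow> a = 0"
proof -
  assume a: "a = - a" and two: "(2::'a) \<noteq> 0"
  have "2 * a = 0" using a by algebra
  then show "a = 0" using two by simp
qed

lemma H3_hm:
  fixes x :: "'a::field mat3"
  assumes x: "x \<in> H3" and two: "(2::'a::field) \<noteq> 0"
  shows "x = hm (crd x)"
proof -
  have s: "x i j = oconj (x j i)" for i j using x unfolding H3_def by blast
  have d: "x i i = sc (re (x i i))" for i
  proof -
    obtain a0 a1 a2 a3 a4 a5 a6 a7 where xi: "x i i = ((a0,a1,a2,a3),(a4,a5,a6,a7))" by (rule oct_cases)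
    have eq: "((a0,a1,a2,a3),(a4,a5,a6,a7)) = oconj ((a0,a1,a2,a3),(a4,a5,a6,a7))"
      using s[of i i] unfolding xi .
    note q = eq[unfolded oconj.simps qconj.simps uminus_Pair prod.inject]
    have A1: "a1 = - a1" using q by blast
    have A2: "a2 = - a2" using q by blast
    have A3: "a3 = - a3" using q by blast
    have A4: "a4 = - a4" using q by blast
    have A5: "a5 = - a5" using q by blast
    have A6: "a6 = - a6" using q by blast
    have A7: "a7 = - a7" using q by blast
    note z = self_neg[OF A1 two] self_neg[OF A2 two] self_neg[OF A3 two] self_neg[OF A4 two]
      self_neg[OF A5 two] self_neg[OF A6 two] self_neg[OF A7 two]
    show ?thesis unfolding xi sc_def re_def by (simp only: z fst_conv)
  qed
  show ?thesis
    apply (rule mat_eqI)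
    apply (simp_all only: crd_def hm.simps three_ne if_True if_False simp_thms)
    apply (rule d s)+
    done
qed



context
  fixes lam mu nu :: "'a::field"
begin

abbreviation "JQ \<equiv> HP lam mu nu"
abbreviation "TQ \<equiv> Tp lam mu nu"

lemma Tp_scale2: "TQ p (hscale c q) = c * TQ p q"
  by (metis Tp_sym Tp_scale1)

lemma HP_zero2: "JQ p 0 = 0"
proof -
  have "JQ p (0 - 0) = JQ p 0 - JQ p 0" by (rule HP_diff2)
  then show ?thesis by simp
qed

definition good :: "('a hc \<Rightarrow> 'a hc) \<Rightarrow> bool" where
 "good G \<longleftrightarrow> (\<forall>p q. G (p + q) = G p + G q) \<and> (\<forall>c p. G (hscale c p) = hscale c (G p)) \<and>
    (\<forall>p q. TQ (G p) q = - TQ p (G q)) \<and> (\<forall>p. G (JQ p p) = JQ p (G p) + JQ p (G p))"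

lemma good_skew: "good G \<Longrightarrow> TQ (G p) q = - TQ p (G q)"
  unfolding good_def by blast

lemma good_sq: "good G \<Longrightarrow> G (JQ p p) = JQ p (G p) + JQ p (G p)"
  unfolding good_def by blast

lemma good_Dp:
  assumes "lam \<noteq> 0" "mu \<noteq> 0" "nu \<noteq> 0" "(2::'a) \<noteq> 0"
  shows "good (Dp lam mu nu a b)"
  unfolding good_def by (intro conjI allI) (rule Dp_add Dp_scale Dp_skew Dp_sq[OF assms])+

lemma good_scale:
  assumes g: "good G"
  shows "good (\<lambda>p. hscale c (G p))"
proof -
  have a: "G (p + q) = G p + G q" "G (hscale d p) = hscale d (G p)" "TQ (G p) q = - TQ p (G q)"
    "G (JQ p p) = JQ p (G p) + JQ p (G p)" for p q d
    using g unfolding good_def by blast+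
  show ?thesis unfolding good_def
    by (simp add: a hscale_add hscale_mult mult.commute Tp_scale1 Tp_scale2 HP_scale2)
qed

lemma good_add:
  assumes f: "good F" and g: "good G"
  shows "good (\<lambda>p. F p + G p)"
proof -
  have a: "F (p + q) = F p + F q" "F (hscale d p) = hscale d (F p)" "TQ (F p) q = - TQ p (F q)"
    "F (JQ p p) = JQ p (F p) + JQ p (F p)" for p q d
    using f unfolding good_def by blast+
  have b: "G (p + q) = G p + G q" "G (hscale d p) = hscale d (G p)" "TQ (G p) q = - TQ p (G q)"
    "G (JQ p p) = JQ p (G p) + JQ p (G p)" for p q d
    using g unfolding good_def by blast+
  show ?thesis unfolding good_def
    by (simp add: a b hscale_add Tp_add1 Tp_add2 HP_add2 algebra_simps)
qed

lemma good_zero: "good (\<lambda>p. 0)"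
  unfolding good_def by (simp add: hscale_zero2 Tp_zero1 Tp_zero2 HP_zero2)

lemma good_sum:
  assumes "\<And>k. good (F k)"
  shows "good (\<lambda>p. \<Sum>k<(m::nat). F k p)"
proof (induct m)
  case 0
  then show ?case using good_zero by simp
next
  case (Suc m)
  then show ?case using good_add[OF Suc assms[of m]] by simp
qed

lemma jprod_hm: "jprod lam mu nu (hm p) (hm q) = hm (hscale (1/2) (JQ p q))"
  by (simp add: jprod_def hm_HP hm_scale)

lemma inner_term:
  "jprod lam mu nu (hm a) (jprod lam mu nu (hm b) (hm p)) - jprod lam mu nu (hm b) (jprod lam mu nu (hm a) (hm p))
   = hm (hscale (1/2) (hscale (1/2) (Dp lam mu nu a b p)))"
  unfolding jprod_hm HP_scale2 Dp_def hscale_diff hm_diff by simp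

lemma hm_sum: "(\<Sum>k<(m::nat). hm (f k)) = hm (\<Sum>k<m. f k)"
  by (induct m) (simp_all add: hm_zero hm_add)

lemma inner_good:
  assumes D: "is_inner_derivation lam mu nu D"
    and nz: "lam \<noteq> 0" "mu \<noteq> 0" "nu \<noteq> 0" "(2::'a) \<noteq> 0"
  shows "\<exists>G. good G \<and> (\<forall>p. D (hm p) = hm (G p))"
proof -
  obtain m :: nat and a b where ab: "\<forall>k<m. a k \<in> H3 \<and> b k \<in> H3"
    and Dx: "\<forall>x\<in>H3. D x = (\<Sum>k<m. jprod lam mu nu (a k) (jprod lam mu nu (b k) x)
                               - jprod lam mu nu (b k) (jprod lam mu nu (a k) x))"
    using D unfolding is_inner_derivation_def by blast
  define G where "G = (\<lambda>p. \<Sum>k<m. hscale (1/2) (hscale (1/2) (Dp lam mu nu (crd (a k)) (crd (b k)) p)))"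
  have "good G" unfolding G_def
    by (intro good_sum good_scale good_Dp nz)
  moreover have "D (hm p) = hm (G p)" for p
  proof -
    have "D (hm p) = (\<Sum>k<m. jprod lam mu nu (a k) (jprod lam mu nu (b k) (hm p))
                               - jprod lam mu nu (b k) (jprod lam mu nu (a k) (hm p)))"
      using Dx hm_H3 by blast
    also have "\<dots> = (\<Sum>k<m. hm (hscale (1/2) (hscale (1/2) (Dp lam mu nu (crd (a k)) (crd (b k)) p))))"
    proof (rule sum.cong[OF refl])
      fix k assume "k \<in> {..<m}"
      then have "a k \<in> H3" "b k \<in> H3" using ab by auto
      then have e: "a k = hm (crd (a k))" "b k = hm (crd (b k))" using H3_hm nz(4) by auto
      show "jprod lam mu nu (a k) (jprod lam mu nu (b k) (hm p)) - jprod lam mu nu (b k) (jprod lam mu nu (a k) (hm p))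
         = hm (hscale (1/2) (hscale (1/2) (Dp lam mu nu (crd (a k)) (crd (b k)) p)))"
        using inner_term[of "crd (a k)" "crd (b k)" p] e by simp
    qed
    also have "\<dots> = hm (G p)" by (simp add: hm_sum G_def)
    finally show ?thesis .
  qed
  ultimately show ?thesis by blast
qed

lemma hc_half: "(2::'a) \<noteq> 0 \<Longrightarrow> hscale (1/2) (u + u) = (u::'a hc)"
proof -
  assume two: "(2::'a) \<noteq> 0"
  have "hscale (1/2) (u + u) = hscale (1/2) (hscale 2 u)" by (simp only: hscale_two)
  also have "\<dots> = hscale ((1/2) * 2) u" by (simp only: hscale_mult)
  also have "(1/2) * 2 = (1::'a)" using two by simp
  finally show ?thesis by (simp only: hscale_one)
qed

lemma hc_cancel2:
  assumes "u + u = v + v" "(2::'a) \<noteq> 0"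
  shows "u = (v::'a hc)"
  by (metis assms hc_half)

lemma two_local_derivation:
  assumes nz: "lam \<noteq> 0" "mu \<noteq> 0" "nu \<noteq> 0" "(2::'a) \<noteq> 0"
    and L: "is_2local_inner_derivation lam mu nu Dl"
  shows "is_derivation lam mu nu Dl"
proof -
  have loc: "\<exists>G. good G \<and> Dl (hm p) = hm (G p) \<and> Dl (hm q) = hm (G q)" for p q
  proof -
    obtain D where D: "is_inner_derivation lam mu nu D" "Dl (hm p) = D (hm p)" "Dl (hm q) = D (hm q)"
      using L hm_H3 unfolding is_2local_inner_derivation_def by blast
    obtain G where "good G" "\<forall>p. D (hm p) = hm (G p)" using inner_good[OF D(1) nz] by blast
    then show ?thesis using D by metis
  qed
  define dl where "dl = (\<lambda>p. crd (Dl (hm p)))"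
  have loc2: "\<exists>G. good G \<and> dl p = G p \<and> dl q = G q" for p q
    using loc[of p q] unfolding dl_def by (auto simp: crd_hm)
  have Dhm: "Dl (hm p) = hm (dl p)" for p
    using loc[of p p] unfolding dl_def by (auto simp: crd_hm)
  have skew: "TQ (dl p) q = - TQ p (dl q)" for p q
  proof -
    obtain G where "good G" "dl p = G p" "dl q = G q" using loc2[of p q] by blast
    then show ?thesis using good_skew[of G p q] by simp
  qed
  have sq: "dl (JQ p p) = JQ p (dl p) + JQ p (dl p)" for p
  proof -
    obtain G where "good G" "dl p = G p" "dl (JQ p p) = G (JQ p p)" using loc2[of p "JQ p p"] by blast
    then show ?thesis using good_sq[of G p] by simp
  qed
  have add: "dl (p + q) = dl p + dl q" for p q
  proof -
    have "dl (p + q) - dl p - dl q = 0"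
    proof (rule Tp_nondeg[OF nz])
      fix z
      show "TQ (dl (p + q) - dl p - dl q) z = 0"
        by (simp add: Tp_diff1 skew Tp_add1)
    qed
    then show ?thesis by (simp add: algebra_simps)
  qed
  have scale: "dl (hscale c p) = hscale c (dl p)" for c p
  proof -
    have "dl (hscale c p) - hscale c (dl p) = 0"
    proof (rule Tp_nondeg[OF nz])
      fix z
      show "TQ (dl (hscale c p) - hscale c (dl p)) z = 0"
        by (simp add: Tp_diff1 skew Tp_scale1)
    qed
    then show ?thesis by simp
  qed
  have leib: "dl (JQ p q) = JQ (dl p) q + JQ p (dl q)" for p q
  proof -
    have c1: "JQ q p = JQ p q" by (rule HP_comm)
    have c2: "JQ q (dl p) = JQ (dl p) q" by (rule HP_comm)
    have e: "dl (JQ (p + q) (p + q)) = JQ (p + q) (dl (p + q)) + JQ (p + q) (dl (p + q))"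
      by (rule sq)
    have l: "dl (JQ (p + q) (p + q)) = dl (JQ p p) + dl (JQ p q) + (dl (JQ p q) + dl (JQ q q))"
      by (simp only: HP_add1 HP_add2 c1 add)
    have r: "JQ (p + q) (dl (p + q)) = JQ p (dl p) + JQ p (dl q) + (JQ (dl p) q + JQ q (dl q))"
      by (simp only: HP_add1 HP_add2 add c2 add_ac)
    have e': "JQ p (dl p) + JQ p (dl p) + dl (JQ p q) + (dl (JQ p q) + (JQ q (dl q) + JQ q (dl q)))
       = JQ p (dl p) + JQ p (dl q) + (JQ (dl p) q + JQ q (dl q)) + (JQ p (dl p) + JQ p (dl q) + (JQ (dl p) q + JQ q (dl q)))"
    proof -
      have "JQ p (dl p) + JQ p (dl p) + dl (JQ p q) + (dl (JQ p q) + (JQ q (dl q) + JQ q (dl q)))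
          = dl (JQ (p + q) (p + q))" by (simp only: l sq[of p] sq[of q])
      also have "\<dots> = JQ (p + q) (dl (p + q)) + JQ (p + q) (dl (p + q))" by (rule e)
      also have "\<dots> = JQ p (dl p) + JQ p (dl q) + (JQ (dl p) q + JQ q (dl q)) + (JQ p (dl p) + JQ p (dl q) + (JQ (dl p) q + JQ q (dl q)))"
        by (simp only: r)
      finally show ?thesis .
    qed
    have "dl (JQ p q) + dl (JQ p q) = (JQ p (dl p) + JQ p (dl p) + dl (JQ p q) + (dl (JQ p q) + (JQ q (dl q) + JQ q (dl q))))
        - (JQ p (dl p) + JQ p (dl p)) - (JQ q (dl q) + JQ q (dl q))"
      by (simp add: algebra_simps)
    also have "\<dots> = (JQ p (dl p) + JQ p (dl q) + (JQ (dl p) q + JQ q (dl q)) + (JQ p (dl p) + JQ p (dl q) + (JQ (dl p) q + JQ q (dl q))))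
        - (JQ p (dl p) + JQ p (dl p)) - (JQ q (dl q) + JQ q (dl q))"
      by (simp only: e')
    also have "\<dots> = (JQ (dl p) q + JQ p (dl q)) + (JQ (dl p) q + JQ p (dl q))"
      by (simp add: algebra_simps)
    finally have "dl (JQ p q) + dl (JQ p q) = (JQ (dl p) q + JQ p (dl q)) + (JQ (dl p) q + JQ p (dl q))" .
    then show ?thesis using hc_cancel2 nz(4) by blast
  qed
  show ?thesis
    unfolding is_derivation_def
  proof (intro conjI ballI allI)
    fix x :: "'a mat3" assume x: "x \<in> H3"
    have "Dl x = hm (dl (crd x))" using H3_hm[OF x nz(4)] Dhm by metis
    then show "Dl x \<in> H3" using hm_H3 by simp
  next
    fix x y :: "'a mat3" assume x: "x \<in> H3" and y: "y \<in> H3"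
    obtain p q where xp: "x = hm p" and yq: "y = hm q" using H3_hm[OF x nz(4)] H3_hm[OF y nz(4)] by blast
    show "Dl (x + y) = Dl x + Dl y"
      unfolding xp yq by (simp only: hm_add[symmetric] Dhm add)
    show "Dl (jprod lam mu nu x y) = jprod lam mu nu (Dl x) y + jprod lam mu nu x (Dl y)"
      unfolding xp yq by (simp only: jprod_hm Dhm scale leib hscale_add hm_add)
  next
    fix c and x :: "'a mat3" assume x: "x \<in> H3"
    obtain p where xp: "x = hm p" using H3_hm[OF x nz(4)] by blast
    show "Dl (mscale c x) = mscale c (Dl x)"
      unfolding xp by (simp only: hm_scale[symmetric] Dhm scale)
  qed
qed

end

theorem theorem3p5:
  fixes lam mu nu :: "'a::field" and \<Delta> :: "'a mat3 \<Rightarrow> 'a mat3"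
  assumes "algebraically_closed TYPE('a)"
    and "(2::'a) \<noteq> 0"
    and "lam \<noteq> 0" and "mu \<noteq> 0" and "nu \<noteq> 0"
    and "is_2local_inner_derivation lam mu nu \<Delta>"
  shows "is_derivation lam mu nu \<Delta>"
  using two_local_derivation[OF assms(3,4,5,2,6)] .


end
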